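(* Let $m\ge 1$ be an integer, $\Gamma_1,\Gamma_2$ co-prime integers with $1<\Gamma_1<\Gamma_2$, $m_1=m\Gamma_1$, $m_2=m\Gamma_2$, and $\sigma_1=|\Gamma_2|_{\Gamma_1}\ge 2$. Let $N$ be an integer with $0\le N< m_1\left(1+\lfloor m_2/m_1\rfloor\lfloor m_1/|m_2|_{m_1}\rfloor\right)$, write $N=n_im_i+r_i$ with $0\le r_i<m_i$ ($i=1,2$), and let $\tilde r_1,\tilde r_2$ be erroneous remainders with errors $\Delta r_i=\tilde r_i-r_i$ satisfying $-\sigma_1/2\le (\Delta r_1-\Delta r_2)/m<\sigma_1/2$. Let $\mathbf q_{21}=(\tilde r_1-\tilde r_2)/m$ and suppose $\mathbf q_{21}<-\sigma_1/2$. If $$\frac{\sigma_1}{2}\le \mathbf q_{21}-\left\lfloor\frac{\mathbf q_{21}}{\Gamma_1}\right\rfloor\Gamma_1<\left\lfloor\frac{\Gamma_1}{\sigma_1}\right\rfloor\sigma_1-\frac{\sigma_1}{2},$$ then $1\le n_2\le \lfloor\Gamma_1/\sigma_1\rfloor-1$; otherwise $n_2=0$.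
   Context: $|a|_b$ denotes the remainder of the integer $a$ modulo the positive integer $b$ (in $[0,b)$). Erroneous remainders are integers $\tilde r_i$ with $0\le \tilde r_i<m_i$. *)

theory Defs
  imports Complex_Main
begin

end

theory Submission
  imports Defs
begin

lemma frac_lem:
  fixes t :: int and G w :: real
  assumes "G > 0" "0 \<le> w" "w < G"
  shows "(real_of_int t * G + w) - real_of_int \<lfloor>(real_of_int t * G + w) / G\<rfloor> * G = w"
proof -
  have "(real_of_int t * G + w) / G = real_of_int t + w / G" using assms by (simp add: field_simps)
  moreover have "0 \<le> w / G" "w / G < 1" using assms by auto
  ultimately have "\<lfloor>(real_of_int t * G + w) / G\<rfloor> = t" by (simp add: floor_eq_iff)
  then show ?thesis by simp
qed

theorem lemma3:
  fixes m \<Gamma>1 \<Gamma>2 N rt1 rt2 :: int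
  assumes hm: "m \<ge> 1"
    and hcop: "coprime \<Gamma>1 \<Gamma>2"
    and hG: "1 < \<Gamma>1" "\<Gamma>1 < \<Gamma>2"
    and hsig: "\<Gamma>2 mod \<Gamma>1 \<ge> 2"
    and hN: "0 \<le> N"
      "N < (m * \<Gamma>1) * (1 + ((m * \<Gamma>2) div (m * \<Gamma>1))
                              * ((m * \<Gamma>1) div ((m * \<Gamma>2) mod (m * \<Gamma>1))))"
    and hr1: "0 \<le> rt1" "rt1 < m * \<Gamma>1"
    and hr2: "0 \<le> rt2" "rt2 < m * \<Gamma>2"
    and herr: "- real_of_int (\<Gamma>2 mod \<Gamma>1) / 2
                 \<le> real_of_int ((rt1 - N mod (m * \<Gamma>1)) - (rt2 - N mod (m * \<Gamma>2))) / real_of_int m"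
              "real_of_int ((rt1 - N mod (m * \<Gamma>1)) - (rt2 - N mod (m * \<Gamma>2))) / real_of_int m
                 < real_of_int (\<Gamma>2 mod \<Gamma>1) / 2"
    and hq: "real_of_int (rt1 - rt2) / real_of_int m < - real_of_int (\<Gamma>2 mod \<Gamma>1) / 2"
  shows "(let \<sigma>1 = real_of_int (\<Gamma>2 mod \<Gamma>1);
              q21 = real_of_int (rt1 - rt2) / real_of_int m;
              v = q21 - real_of_int \<lfloor>q21 / real_of_int \<Gamma>1\<rfloor> * real_of_int \<Gamma>1;
              n2 = N div (m * \<Gamma>2)
          in (if \<sigma>1 / 2 \<le> v \<and> v < real_of_int (\<Gamma>1 div (\<Gamma>2 mod \<Gamma>1)) * \<sigma>1 - \<sigma>1 / 2
              then 1 \<le> n2 \<and> n2 \<le> \<Gamma>1 div (\<Gamma>2 mod \<Gamma>1) - 1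
              else n2 = 0))"
proof -
  define s where "s = \<Gamma>2 mod \<Gamma>1"
  define a where "a = \<Gamma>2 div \<Gamma>1"
  define k where "k = \<Gamma>1 div s"
  define n1 where "n1 = N div (m * \<Gamma>1)"
  define n2 where "n2 = N div (m * \<Gamma>2)"
  define d where "d = n2 * \<Gamma>2 - n1 * \<Gamma>1"
  have G2: "\<Gamma>2 = a * \<Gamma>1 + s" unfolding a_def s_def by simp
  have s2: "s \<ge> 2" using hsig s_def by simp
  have sl: "s < \<Gamma>1" using hG unfolding s_def by simp
  have a1: "a \<ge> 1" using hG unfolding a_def using zdiv_mono1[of "\<Gamma>1" "\<Gamma>2" "\<Gamma>1"] by simp
  have e1: "(m * \<Gamma>2) div (m * \<Gamma>1) = a" using hm unfolding a_def by simp
  have e2: "(m * \<Gamma>2) mod (m * \<Gamma>1) = m * s" using hm unfolding s_def by simp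
  have e3: "(m * \<Gamma>1) div (m * s) = k" using hm unfolding k_def by simp
  have hN2: "N < m * \<Gamma>1 * (1 + a * k)" using hN(2) e1 e2 e3 by simp
  have nd: "\<not> s dvd \<Gamma>1"
  proof
    assume "s dvd \<Gamma>1"
    then have "s dvd \<Gamma>2" using G2 by simp
    with \<open>s dvd \<Gamma>1\<close> hcop have "is_unit s" by (meson coprime_common_divisor)
    with s2 show False by simp
  qed
  have ks: "k * s < \<Gamma>1"
  proof -
    have "k * s + \<Gamma>1 mod s = \<Gamma>1" unfolding k_def by simp
    moreover have "\<Gamma>1 mod s \<noteq> 0" using nd by (simp add: dvd_eq_mod_eq_0)
    moreover have "\<Gamma>1 mod s \<ge> 0" using s2 by simp
    ultimately show ?thesis by linarith
  qed
  have k1s: "(k + 1) * s > \<Gamma>1"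
  proof -
    have "k * s + \<Gamma>1 mod s = \<Gamma>1" unfolding k_def by simp
    moreover have "\<Gamma>1 mod s < s" using s2 by simp
    ultimately show ?thesis by (simp add: algebra_simps)
  qed
  have k0: "k \<ge> 0" unfolding k_def using s2 hG by (simp add: pos_imp_zdiv_nonneg_iff)
  have m1: "N mod (m * \<Gamma>1) = N - n1 * (m * \<Gamma>1)" unfolding n1_def by (simp add: minus_div_mult_eq_mod)
  have m2: "N mod (m * \<Gamma>2) = N - n2 * (m * \<Gamma>2)" unfolding n2_def by (simp add: minus_div_mult_eq_mod)
  have md: "N mod (m * \<Gamma>1) - N mod (m * \<Gamma>2) = m * d" unfolding m1 m2 d_def by (simp add: algebra_simps)
  have dmod: "d mod \<Gamma>1 = (n2 * s) mod \<Gamma>1"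
  proof -
    have "d = (n2 * a - n1) * \<Gamma>1 + n2 * s" unfolding d_def G2 by (simp add: algebra_simps)
    then show ?thesis by simp
  qed
  define e where "e = real_of_int ((rt1 - N mod (m * \<Gamma>1)) - (rt2 - N mod (m * \<Gamma>2))) / real_of_int m"
  define q where "q = real_of_int (rt1 - rt2) / real_of_int m"
  have qde: "q = real_of_int d + e"
  proof -
    have "rt1 - rt2 = ((rt1 - N mod (m * \<Gamma>1)) - (rt2 - N mod (m * \<Gamma>2))) + m * d" using md by simp
    then have "real_of_int (rt1 - rt2) = real_of_int ((rt1 - N mod (m * \<Gamma>1)) - (rt2 - N mod (m * \<Gamma>2))) + real_of_int m * real_of_int d"
      by (metis of_int_add of_int_mult)
    then show ?thesis unfolding q_def e_def using hm by (simp add: field_simps)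
  qed
  have eb: "- real_of_int s / 2 \<le> e" "e < real_of_int s / 2" using herr unfolding e_def s_def by auto
  have qb: "q < - real_of_int s / 2" using hq unfolding q_def s_def by simp
  have dneg: "d < 0"
  proof -
    have "real_of_int d < 0" using qde eb qb by linarith
    then show ?thesis by simp
  qed
  have n20: "n2 \<ge> 0" unfolding n2_def using hN hm hG by (simp add: div_int_pos_iff)
  have n2le: "n2 \<le> k"
  proof (rule ccontr)
    assume "\<not> n2 \<le> k"
    then have "n2 \<ge> k + 1" by simp
    have mG2: "m * \<Gamma>2 > 0" using hm hG by simp
    have "N mod (m * \<Gamma>2) \<ge> 0" using mG2 by simp
    then have "N \<ge> n2 * (m * \<Gamma>2)" using m2 by linarith
    moreover have "n2 * (m * \<Gamma>2) \<ge> (k+1) * (m * \<Gamma>2)" using \<open>n2 \<ge> k + 1\<close> hm hG by (intro mult_right_mono) auto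
    moreover have "(k+1) * (m * \<Gamma>2) = m * ((k+1) * a * \<Gamma>1 + (k+1) * s)" unfolding G2 by (simp add: algebra_simps)
    moreover have "m * ((k+1) * a * \<Gamma>1 + (k+1) * s) \<ge> m * (k * a * \<Gamma>1 + \<Gamma>1 + \<Gamma>1)"
    proof -
      have "(k+1) * a * \<Gamma>1 \<ge> k * a * \<Gamma>1 + \<Gamma>1" using a1 hG by (simp add: algebra_simps)
      then show ?thesis using k1s hm by (intro mult_left_mono) auto
    qed
    ultimately have X1: "N \<ge> m * (k * a * \<Gamma>1 + \<Gamma>1 + \<Gamma>1)" by linarith
    have X2: "m * \<Gamma>1 * (1 + a * k) = m * (k * a * \<Gamma>1 + \<Gamma>1)" by (simp add: algebra_simps)
    have X3: "m * (k * a * \<Gamma>1 + \<Gamma>1 + \<Gamma>1) = m * (k * a * \<Gamma>1 + \<Gamma>1) + m * \<Gamma>1" by (simp add: algebra_simps)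
    have X4: "m * \<Gamma>1 > 0" using hm hG by simp
    show False using hN2 X1 X2 X3 X4 by linarith
  qed
  have n2nk: "n2 \<noteq> k"
  proof
    assume nk: "n2 = k"
    have r2: "N mod (m * \<Gamma>2) \<ge> 0" using hm hG by simp
    have Nr: "N = (k * a) * (m * \<Gamma>1) + (k * m * s + N mod (m * \<Gamma>2))"
      using m2 nk G2 by (simp add: algebra_simps)
    have lt: "k * m * s + N mod (m * \<Gamma>2) < m * \<Gamma>1"
      using hN2 Nr by (simp add: algebra_simps)
    have ge: "k * m * s + N mod (m * \<Gamma>2) \<ge> 0" using r2 k0 s2 hm by simp
    have "N mod (m * \<Gamma>1) = k * m * s + N mod (m * \<Gamma>2)"
      using Nr lt ge by (metis mod_mult_self3 mod_pos_pos_trivial)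
    then have "m * d = m * (k * s)" using md by (simp add: algebra_simps) (metis)
    then have "d = k * s" using hm by simp
    moreover have "k * s \<ge> 0" using k0 s2 by simp
    ultimately show False using dneg by linarith
  qed
  have n2k: "n2 \<le> k - 1" using n2le n2nk by simp
  have ns1: "n2 * s \<le> k * s" using n2le s2 by (intro mult_right_mono) auto
  have ns: "n2 * s < \<Gamma>1" "n2 * s \<ge> 0"
    using ns1 ks n20 s2 by (linarith, simp)
  define t where "t = d div \<Gamma>1"
  have dt: "d = t * \<Gamma>1 + n2 * s"
  proof -
    have "(n2 * s) mod \<Gamma>1 = n2 * s" using ns by simp
    then show ?thesis unfolding t_def using dmod by (metis div_mult_mod_eq)
  qed
  have Gp: "real_of_int \<Gamma>1 > 0" using hG by simp
  have cond_iff: "(real_of_int s / 2 \<le> q - real_of_int \<lfloor>q / real_of_int \<Gamma>1\<rfloor> * real_of_int \<Gamma>1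
        \<and> q - real_of_int \<lfloor>q / real_of_int \<Gamma>1\<rfloor> * real_of_int \<Gamma>1 < real_of_int k * real_of_int s - real_of_int s / 2)
        \<longleftrightarrow> n2 \<ge> 1"
  proof (cases "n2 \<ge> 1")
    case True
    have w1: "real_of_int (n2 * s) + e \<ge> real_of_int s / 2"
    proof -
      have "n2 * s \<ge> s" using True s2 by simp
      then have "real_of_int (n2 * s) \<ge> real_of_int s" by linarith
      then show ?thesis using eb by linarith
    qed
    have w2: "real_of_int (n2 * s) + e < real_of_int k * real_of_int s - real_of_int s / 2"
    proof -
      have "n2 * s \<le> (k - 1) * s" using n2k s2 by (intro mult_right_mono) auto
      then have "real_of_int (n2 * s) \<le> real_of_int k * real_of_int s - real_of_int s"
        by (metis of_int_le_iff of_int_mult of_int_diff left_diff_distrib mult_1)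
      then show ?thesis using eb by linarith
    qed
    have w3: "real_of_int k * real_of_int s \<le> real_of_int \<Gamma>1" using ks
      by (metis of_int_le_iff of_int_mult less_imp_le)
    have qq: "q = real_of_int t * real_of_int \<Gamma>1 + (real_of_int (n2 * s) + e)" using qde dt by simp
    have sr: "real_of_int s \<ge> 2" using s2 by simp
    have w4: "0 \<le> real_of_int (n2 * s) + e" "real_of_int (n2 * s) + e < real_of_int \<Gamma>1"
      using w1 w2 w3 sr by linarith+
    have "q - real_of_int \<lfloor>q / real_of_int \<Gamma>1\<rfloor> * real_of_int \<Gamma>1 = real_of_int (n2 * s) + e"
      unfolding qq by (rule frac_lem[OF Gp w4])
    then show ?thesis using True w1 w2 by simp
  next
    case False
    then have z: "n2 = 0" using n20 by simp
    have w3: "real_of_int k * real_of_int s + 1 \<le> real_of_int \<Gamma>1" using ks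
      by (metis of_int_le_iff of_int_mult of_int_add of_int_1 zless_imp_add1_zle)
    show ?thesis
    proof (cases "e \<ge> 0")
      case True
      have "q = real_of_int t * real_of_int \<Gamma>1 + e" using qde dt z by simp
      moreover have "e < real_of_int \<Gamma>1" using eb sl by linarith
      ultimately have "q - real_of_int \<lfloor>q / real_of_int \<Gamma>1\<rfloor> * real_of_int \<Gamma>1 = e"
        using frac_lem[OF Gp, of e t] True by simp
      then show ?thesis using eb False by simp
    next
      case f: False
      have "q = real_of_int (t - 1) * real_of_int \<Gamma>1 + (real_of_int \<Gamma>1 + e)" using qde dt z by (simp add: algebra_simps)
      moreover have "real_of_int \<Gamma>1 + e \<ge> 0" using eb sl by linarith
      ultimately have "q - real_of_int \<lfloor>q / real_of_int \<Gamma>1\<rfloor> * real_of_int \<Gamma>1 = real_of_int \<Gamma>1 + e"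
        using frac_lem[OF Gp, of "real_of_int \<Gamma>1 + e" "t - 1"] f by simp
      then show ?thesis using eb False w3 by simp
    qed
  qed
  show ?thesis
    unfolding Let_def
    using cond_iff n2k n20
    unfolding q_def[symmetric] s_def[symmetric] k_def[symmetric] n2_def[symmetric]
    by auto
qed

end
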